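(* Every tree admits a canonical dominating set.
   Context: A set $D\subseteq V(G)$ is a dominating set if every vertex of $G$ is in $D$ or adjacent to a vertex of $D$. Two dominating sets $D,D'$ are adjacent if $|D\triangle D'|=1$. For dominating sets $D_p,D_q$ and an integer $k>0$, write $D_p\leftrightarrow_k D_q$ if there is a sequence $D_0=D_p,\dots,D_\ell=D_q$ ($\ell\ge0$) of dominating sets of $G$ with consecutive sets adjacent and $|D_i|\le k$ for all $i$. A minimum dominating set $D^*$ of $G$ is canonical if $D\leftrightarrow_{|D|+1} D^*$ for every dominating set $D$ of $G$. *)

theory Defs
  imports Main
begin

definition simple_graph :: "'a set \<Rightarrow> ('a \<Rightarrow> 'a \<Rightarrow> bool) \<Rightarrow> bool" where
  "simple_graph V E \<longleftrightarrow> finite V \<and> (\<forall>u v. E u v \<longrightarrow> u \<in> V \<and> v \<in> V)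
     \<and> (\<forall>u v. E u v \<longrightarrow> E v u) \<and> (\<forall>v. \<not> E v v)"

definition is_walk :: "'a set \<Rightarrow> ('a \<Rightarrow> 'a \<Rightarrow> bool) \<Rightarrow> 'a list \<Rightarrow> bool" where
  "is_walk V E p \<longleftrightarrow> p \<noteq> [] \<and> set p \<subseteq> V \<and> (\<forall>i. Suc i < length p \<longrightarrow> E (p ! i) (p ! Suc i))"

definition connected_graph :: "'a set \<Rightarrow> ('a \<Rightarrow> 'a \<Rightarrow> bool) \<Rightarrow> bool" where
  "connected_graph V E \<longleftrightarrow> (\<forall>u\<in>V. \<forall>v\<in>V. \<exists>p. is_walk V E p \<and> hd p = u \<and> last p = v)"

definition is_cycle :: "'a set \<Rightarrow> ('a \<Rightarrow> 'a \<Rightarrow> bool) \<Rightarrow> 'a list \<Rightarrow> bool" where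
  "is_cycle V E c \<longleftrightarrow> length c \<ge> 3 \<and> distinct c \<and> is_walk V E c \<and> E (last c) (hd c)"

definition is_tree :: "'a set \<Rightarrow> ('a \<Rightarrow> 'a \<Rightarrow> bool) \<Rightarrow> bool" where
  "is_tree V E \<longleftrightarrow> simple_graph V E \<and> V \<noteq> {} \<and> connected_graph V E \<and> (\<nexists>c. is_cycle V E c)"

definition dominating_set :: "'a set \<Rightarrow> ('a \<Rightarrow> 'a \<Rightarrow> bool) \<Rightarrow> 'a set \<Rightarrow> bool" where
  "dominating_set V E D \<longleftrightarrow> D \<subseteq> V \<and> (\<forall>v\<in>V. v \<in> D \<or> (\<exists>u\<in>D. E u v))"

definition ds_adjacent :: "'a set \<Rightarrow> 'a set \<Rightarrow> bool" where
  "ds_adjacent D D' \<longleftrightarrow> card ((D - D') \<union> (D' - D)) = 1"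

definition reconf :: "'a set \<Rightarrow> ('a \<Rightarrow> 'a \<Rightarrow> bool) \<Rightarrow> nat \<Rightarrow> 'a set \<Rightarrow> 'a set \<Rightarrow> bool" where
  "reconf V E k Dp Dq \<longleftrightarrow> (\<exists>Ds. Ds \<noteq> [] \<and> hd Ds = Dp \<and> last Ds = Dq
     \<and> (\<forall>D\<in>set Ds. dominating_set V E D \<and> card D \<le> k)
     \<and> (\<forall>i. Suc i < length Ds \<longrightarrow> ds_adjacent (Ds ! i) (Ds ! Suc i)))"

definition min_dominating_set :: "'a set \<Rightarrow> ('a \<Rightarrow> 'a \<Rightarrow> bool) \<Rightarrow> 'a set \<Rightarrow> bool" where
  "min_dominating_set V E D \<longleftrightarrow> dominating_set V E D \<and>
     (\<forall>D'. dominating_set V E D' \<longrightarrow> card D \<le> card D')"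

definition canonical_dominating_set :: "'a set \<Rightarrow> ('a \<Rightarrow> 'a \<Rightarrow> bool) \<Rightarrow> 'a set \<Rightarrow> bool" where
  "canonical_dominating_set V E Ds \<longleftrightarrow> min_dominating_set V E Ds \<and>
     (\<forall>D. dominating_set V E D \<longrightarrow> reconf V E (card D + 1) D Ds)"

end

theory Submission
  imports Defs
begin

definition rdom :: "'a set \<Rightarrow> ('a \<Rightarrow> 'a \<Rightarrow> bool) \<Rightarrow> 'a set \<Rightarrow> 'a set \<Rightarrow> bool" where
  "rdom V E R D \<longleftrightarrow> D \<subseteq> V \<and> (\<forall>v\<in>R. v \<in> D \<or> (\<exists>u\<in>D. E u v))"

inductive rr :: "'a set \<Rightarrow> ('a \<Rightarrow> 'a \<Rightarrow> bool) \<Rightarrow> 'a set \<Rightarrow> nat \<Rightarrow> 'a set \<Rightarrow> 'a set \<Rightarrow> bool"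
  for V E R k where
  base: "rdom V E R A \<Longrightarrow> card A \<le> k \<Longrightarrow> rr V E R k A A"
| step: "rr V E R k A B \<Longrightarrow> ds_adjacent B C \<Longrightarrow> rdom V E R C \<Longrightarrow> card C \<le> k \<Longrightarrow> rr V E R k A C"

lemma rr_trans: "rr V E R k B C \<Longrightarrow> rr V E R k A B \<Longrightarrow> rr V E R k A C"
  by (induction rule: rr.induct) (auto intro: rr.step)

lemma rr_last: "rr V E R k A B \<Longrightarrow> rdom V E R B \<and> card B \<le> k"
  by (induction rule: rr.induct) auto

lemma rr_map:
  assumes "rr V E R k A B"
    and "\<And>T. rdom V E R T \<Longrightarrow> card T \<le> k \<Longrightarrow> rdom V' E R' (f T) \<and> card (f T) \<le> k'"
    and "\<And>X Y. rdom V E R X \<Longrightarrow> rdom V E R Y \<Longrightarrow> ds_adjacent X Y \<Longrightarrow> ds_adjacent (f X) (f Y)"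
  shows "rr V' E R' k' (f A) (f B)"
  using assms(1)
proof (induction rule: rr.induct)
  case (base A)
  then show ?case using assms(2) by (auto intro: rr.base)
next
  case (step A B C)
  then show ?case using assms(2,3) rr_last[OF step(1)] by (auto intro: rr.step)
qed

lemma adj_remove: "x \<in> X \<Longrightarrow> ds_adjacent (X - {x}) X \<and> ds_adjacent X (X - {x})"
proof -
  assume "x \<in> X"
  then have "(X - {x} - X) \<union> (X - (X - {x})) = {x}" "(X - (X - {x})) \<union> (X - {x} - X) = {x}" by auto
  then show ?thesis unfolding ds_adjacent_def by simp
qed

lemma rdom_super: "rdom V E R A \<Longrightarrow> A \<subseteq> C \<Longrightarrow> C \<subseteq> V \<Longrightarrow> rdom V E R C"
  unfolding rdom_def by blast

lemma rr_grow:
  assumes "finite V" "rdom V E R A"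
  shows "A \<subseteq> C \<Longrightarrow> C \<subseteq> V \<Longrightarrow> card C \<le> k \<Longrightarrow> rr V E R k A C"
proof (induction "card (C - A)" arbitrary: C rule: less_induct)
  case less
  show ?case
  proof (cases "C = A")
    case True
    then show ?thesis using less assms by (auto intro: rr.base)
  next
    case False
    then obtain x where x: "x \<in> C" "x \<notin> A" using less by blast
    have fC: "finite C" using less assms finite_subset by blast
    have "card (C - {x} - A) < card (C - A)"
    proof -
      have "C - {x} - A = (C - A) - {x}" by auto
      moreover have "card ((C - A) - {x}) < card (C - A)"
        using x fC by (intro card_Diff1_less) auto
      ultimately show ?thesis by simp
    qed
    moreover have "card (C - {x}) \<le> k" using less fC
      by (meson card_Diff1_le le_trans)
    moreover have "A \<subseteq> C - {x}" "C - {x} \<subseteq> V" using less x by auto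
    ultimately have "rr V E R k A (C - {x})" using less.hyps by blast
    then show ?thesis using adj_remove[OF x(1)] rdom_super[OF assms(2) less(2,3)] less(4)
      by (auto intro: rr.step)
  qed
qed

lemma rr_shrink:
  assumes "finite V" "C \<subseteq> V" "card C \<le> k"
  shows "rdom V E R B \<Longrightarrow> B \<subseteq> C \<Longrightarrow> rr V E R k C B"
proof (induction "card (C - B)" arbitrary: B rule: less_induct)
  case less
  have fC: "finite C" using assms finite_subset by blast
  show ?case
  proof (cases "C = B")
    case True
    then show ?thesis using less assms by (simp add: rr.base)
  next
    case False
    then obtain x where x: "x \<in> C" "x \<notin> B" using less by blast
    have "card (C - insert x B) < card (C - B)"
    proof -
      have "C - insert x B = (C - B) - {x}" by auto
      moreover have "card ((C - B) - {x}) < card (C - B)"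
        using x fC by (intro card_Diff1_less) auto
      ultimately show ?thesis by simp
    qed
    moreover have rI: "rdom V E R (insert x B)" using rdom_super[OF less(2)] x assms(2) less(3) by auto
    moreover have "insert x B \<subseteq> C" using less x by auto
    ultimately have "rr V E R k C (insert x B)" using less.hyps by blast
    moreover have "card B \<le> k" using less fC assms(3) by (meson card_mono le_trans)
    moreover have "ds_adjacent (insert x B) B" using adj_remove[of x "insert x B"] x by auto
    ultimately show ?thesis using less by (auto intro: rr.step)
  qed
qed

lemma rr_via:
  assumes "finite V" "rdom V E R A" "rdom V E R B" "A \<subseteq> C" "B \<subseteq> C" "C \<subseteq> V" "card C \<le> k"
  shows "rr V E R k A B"
  using rr_trans[OF rr_shrink[OF assms(1,6,7,3,5)] rr_grow[OF assms(1,2,4,6,7)]] .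


definition canon :: "'a set \<Rightarrow> ('a \<Rightarrow> 'a \<Rightarrow> bool) \<Rightarrow> 'a set \<Rightarrow> 'a set \<Rightarrow> bool" where
  "canon V E R D \<longleftrightarrow> rdom V E R D \<and> (\<forall>S. rdom V E R S \<longrightarrow> card D \<le> card S)
     \<and> (\<forall>S. rdom V E R S \<longrightarrow> rr V E R (card S + 1) S D)"

definition degen :: "'a set \<Rightarrow> ('a \<Rightarrow> 'a \<Rightarrow> bool) \<Rightarrow> bool" where
  "degen V E \<longleftrightarrow> (\<forall>W\<subseteq>V. W \<noteq> {} \<longrightarrow> (\<exists>u\<in>W. \<forall>a\<in>W. \<forall>b\<in>W. E u a \<longrightarrow> E u b \<longrightarrow> a = b))"

lemma degen_sub: "degen V E \<Longrightarrow> W \<subseteq> V \<Longrightarrow> degen W E"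
  unfolding degen_def by blast

lemma main:
  assumes sym: "\<And>a b. E a b \<Longrightarrow> E b a"
  shows "finite V \<Longrightarrow> R \<subseteq> V \<Longrightarrow> degen V E \<Longrightarrow> \<exists>D. canon V E R D"
proof (induction "card V" arbitrary: V R rule: less_induct)
  case less
  note fV = less(2) and RV = less(3) and dg = less(4)
  show ?case
  proof (cases "R = {}")
    case True
    have "canon V E R {}"
      unfolding canon_def
    proof (intro conjI allI impI)
      show "rdom V E R {}" using True by (simp add: rdom_def)
      fix S assume S: "rdom V E R S"
      show "card {} \<le> card S" by simp
      show "rr V E R (card S + 1) S {}"
        apply (rule rr_shrink[OF fV])
        using S \<open>rdom V E R {}\<close> unfolding rdom_def by auto
    qed
    then show ?thesis by blast
  next
    case False
    then have "V \<noteq> {}" using RV by blast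
    then obtain u where u: "u \<in> V" and uu: "\<forall>a\<in>V. \<forall>b\<in>V. E u a \<longrightarrow> E u b \<longrightarrow> a = b"
      using dg unfolding degen_def by blast
    obtain c where c: "c \<in> V" "c = u \<or> E c u" "\<forall>x\<in>V. E u x \<longrightarrow> x = c"
    proof (cases "\<exists>x\<in>V. E u x")
      case True
      then obtain x where "x \<in> V" "E u x" by blast
      then show ?thesis using that[of x] sym uu by blast
    next
      case False
      then show ?thesis using that[of u] u by blast
    qed
    have fin: "\<And>S. S \<subseteq> V \<Longrightarrow> finite S" using fV finite_subset by blast
    show ?thesis
    proof (cases "u \<in> R")
      case False
      define W where "W = V - {u}"
      have WV: "W \<subseteq> V" unfolding W_def by auto
      have cW: "card W < card V" apply (rule psubset_card_mono[OF fV]) using u unfolding W_def by auto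
      have fW: "finite W" using fV WV finite_subset by blast
      have RW: "R \<subseteq> W" using RV False unfolding W_def by blast
      obtain D where D: "canon W E R D"
        using less(1)[OF cW fW RW degen_sub[OF dg WV]] by blast
      have lift: "\<And>T. rdom W E R T \<Longrightarrow> rdom V E R T" using WV unfolding rdom_def by blast
      have "canon V E R D"
        unfolding canon_def
      proof (intro conjI allI impI)
        show "rdom V E R D" using D lift unfolding canon_def by blast
        fix S assume S: "rdom V E R S"
        define S' where "S' = (if u \<in> S then insert c S - {u} else S)"
        have S'W: "rdom W E R S'"
          unfolding rdom_def
        proof (intro conjI ballI)
          show "S' \<subseteq> W" using S c unfolding rdom_def S'_def W_def by auto
          fix v assume v: "v \<in> R"
          then have "v \<noteq> u" using False by blast
          from v S have "v \<in> S \<or> (\<exists>x\<in>S. E x v)" unfolding rdom_def by blast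
          then show "v \<in> S' \<or> (\<exists>x\<in>S'. E x v)"
          proof
            assume "v \<in> S" then show ?thesis using \<open>v \<noteq> u\<close> unfolding S'_def by auto
          next
            assume "\<exists>x\<in>S. E x v"
            then obtain x where x: "x \<in> S" "E x v" by blast
            show ?thesis
            proof (cases "x = u")
              case True
              then have "v = c" using c(3) x RV v unfolding rdom_def by blast
              then show ?thesis using \<open>v \<noteq> u\<close> True x unfolding S'_def by auto
            next
              case False
              then show ?thesis using x unfolding S'_def by auto
            qed
          qed
        qed
        have fS: "finite S" using S fin unfolding rdom_def by blast
        have cS: "card S' \<le> card S"
        proof (cases "u \<in> S")
          case True
          then have "card S' = card (insert c S) - 1" unfolding S'_def using fS by simp
          also have "\<dots> \<le> card S" using fS by (simp add: card_insert_if)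
          finally show ?thesis .
        qed (simp add: S'_def)
        have "card D \<le> card S'" using D S'W unfolding canon_def by blast
        then show "card D \<le> card S" using cS by linarith
        have r1: "rr V E R (card S + 1) S S'"
          apply (rule rr_via[OF fV S lift[OF S'W], of "insert c S"])
          using S c fS unfolding S'_def rdom_def by (auto simp: card_insert_if)
        have "rr W E R (card S' + 1) S' D" using D S'W unfolding canon_def by blast
        then have r2: "rr V E R (card S + 1) (id S') (id D)"
        proof (rule rr_map[where f=id])
          fix T assume "rdom W E R T" "card T \<le> card S' + 1"
          then show "rdom V E R (id T) \<and> card (id T) \<le> card S + 1" using lift cS by simp
        qed simp
        then have r2: "rr V E R (card S + 1) S' D" by simp
        show "rr V E R (card S + 1) S D" using rr_trans[OF r2 r1] .
      qed
      then show ?thesis by blast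
    next
      case True
      define W where "W = V - {u, c}"
      define R' where "R' = {v\<in>R. v \<noteq> u \<and> v \<noteq> c \<and> \<not> E c v}"
      have WV: "W \<subseteq> V" unfolding W_def by auto
      have cW: "card W < card V" apply (rule psubset_card_mono[OF fV]) using u unfolding W_def by auto
      have R'W: "R' \<subseteq> W" using RV unfolding R'_def W_def by auto
      have fW: "finite W" using fV WV finite_subset by blast
      obtain D where D: "canon W E R' D"
        using less(1)[OF cW fW R'W degen_sub[OF dg WV]] by blast
      have lift: "\<And>T. rdom W E R' T \<Longrightarrow> rdom V E R (insert c T)"
      proof -
        fix T assume T: "rdom W E R' T"
        show "rdom V E R (insert c T)" unfolding rdom_def
        proof (intro conjI ballI)
          show "insert c T \<subseteq> V" using T WV c unfolding rdom_def by blast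
          fix v assume v: "v \<in> R"
          show "v \<in> insert c T \<or> (\<exists>x\<in>insert c T. E x v)"
          proof (cases "v \<in> R'")
            case True
            then show ?thesis using T unfolding rdom_def by blast
          next
            case False
            then have "v = u \<or> v = c \<or> E c v" using v unfolding R'_def by blast
            then show ?thesis using c(2) by blast
          qed
        qed
      qed
      have cnot: "\<And>T. rdom W E R' T \<Longrightarrow> c \<notin> T" unfolding rdom_def W_def by blast
      have finW: "\<And>T. rdom W E R' T \<Longrightarrow> finite T" using fin WV unfolding rdom_def by blast
      have cardI: "\<And>T. rdom W E R' T \<Longrightarrow> card (insert c T) = card T + 1"
        using cnot finW by simp
      have "canon V E R (insert c D)"
        unfolding canon_def
      proof (intro conjI allI impI)
        have rD: "rdom W E R' D" using D unfolding canon_def by blast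
        show "rdom V E R (insert c D)" using lift[OF rD] .
        fix S assume S: "rdom V E R S"
        have uc: "u \<in> S \<or> c \<in> S"
        proof -
          have "u \<in> S \<or> (\<exists>x\<in>S. E x u)" using S True unfolding rdom_def by blast
          moreover have "\<And>x. x \<in> S \<Longrightarrow> E x u \<Longrightarrow> x = c"
            using S c(3) sym unfolding rdom_def by blast
          ultimately show ?thesis by blast
        qed
        define S' where "S' = S - {u, c}"
        have S'W: "rdom W E R' S'"
          unfolding rdom_def
        proof (intro conjI ballI)
          show "S' \<subseteq> W" using S unfolding rdom_def S'_def W_def by auto
          fix v assume v: "v \<in> R'"
          then have v2: "v \<in> R" "v \<noteq> u" "v \<noteq> c" "\<not> E c v" unfolding R'_def by auto
          from v2(1) S have "v \<in> S \<or> (\<exists>x\<in>S. E x v)" unfolding rdom_def by blast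
          then show "v \<in> S' \<or> (\<exists>x\<in>S'. E x v)"
          proof
            assume "v \<in> S" then show ?thesis using v2 unfolding S'_def by auto
          next
            assume "\<exists>x\<in>S. E x v"
            then obtain x where x: "x \<in> S" "E x v" by blast
            have "x \<noteq> c" using x v2 by blast
            moreover have "x \<noteq> u" using c(3) x v2 RV by blast
            ultimately show ?thesis using x unfolding S'_def by auto
          qed
        qed
        have fS: "finite S" using S fin unfolding rdom_def by blast
        have cS: "card (insert c S') \<le> card S"
        proof (cases "c \<in> S")
          case True
          then have "insert c S' \<subseteq> S" unfolding S'_def by auto
          then show ?thesis using fS by (simp add: card_mono)
        next
          case False
          then have "insert c S' = insert c (S - {u})" "u \<in> S" using uc unfolding S'_def by auto
          moreover have "card S > 0" using fS \<open>u \<in> S\<close> card_gt_0_iff by blast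
          ultimately show ?thesis using fS False by (simp add: card_insert_if)
        qed
        have "card D \<le> card S'" using D S'W unfolding canon_def by blast
        then show "card (insert c D) \<le> card S"
          using cS cardI[OF S'W] cardI[OF rD] by linarith
        have r1: "rr V E R (card S + 1) S (insert c S')"
          apply (rule rr_via[OF fV S lift[OF S'W], of "insert c S"])
          using S c fS unfolding S'_def rdom_def by (auto simp: card_insert_if)
        have "rr W E R' (card S' + 1) S' D" using D S'W unfolding canon_def by blast
        then have r2: "rr V E R (card S + 1) (insert c S') (insert c D)"
        proof (rule rr_map[where f="insert c"])
          fix T assume T: "rdom W E R' T" "card T \<le> card S' + 1"
          show "rdom V E R (insert c T) \<and> card (insert c T) \<le> card S + 1"
            using lift[OF T(1)] cardI[OF T(1)] cardI[OF S'W] T(2) cS by simp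
        next
          fix X Y assume X: "rdom W E R' X" and Y: "rdom W E R' Y" and "ds_adjacent X Y"
          moreover have "(insert c X - insert c Y) \<union> (insert c Y - insert c X) = (X - Y) \<union> (Y - X)"
            using cnot[OF X] cnot[OF Y] by auto
          ultimately show "ds_adjacent (insert c X) (insert c Y)" unfolding ds_adjacent_def by simp
        qed
        show "rr V E R (card S + 1) S (insert c D)" using rr_trans[OF r2 r1] .
      qed
      then show ?thesis by blast
    qed
  qed
qed


lemma walk_Cons:
  assumes "x \<in> V" "p \<noteq> []" "E x (hd p)" "is_walk V E p"
  shows "is_walk V E (x # p)"
  unfolding is_walk_def
proof (intro conjI allI impI)
  show "x # p \<noteq> []" by simp
  show "set (x # p) \<subseteq> V" using assms unfolding is_walk_def by auto
  fix i assume i: "Suc i < length (x # p)"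
  show "E ((x # p) ! i) ((x # p) ! Suc i)"
  proof (cases i)
    case 0
    then show ?thesis using assms by (simp add: hd_conv_nth)
  next
    case (Suc j)
    then show ?thesis using assms i unfolding is_walk_def by auto
  qed
qed

lemma walk_take:
  assumes "is_walk V E p" "0 < n"
  shows "is_walk V E (take n p)"
  using assms unfolding is_walk_def
  by (auto dest: in_set_takeD)

lemma walk_mono: "is_walk W E p \<Longrightarrow> W \<subseteq> V \<Longrightarrow> is_walk V E p"
  unfolding is_walk_def by blast

lemma acyclic_degen:
  assumes sg: "simple_graph V E" and nc: "\<nexists>c. is_cycle V E c"
  shows "degen V E"
  unfolding degen_def
proof (intro allI impI)
  fix W assume WV: "W \<subseteq> V" and Wne: "W \<noteq> {}"
  have fW: "finite W" using sg WV finite_subset unfolding simple_graph_def by blast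
  have sym: "\<And>a b. E a b \<Longrightarrow> E b a" using sg unfolding simple_graph_def by blast
  have irr: "\<And>a. \<not> E a a" using sg unfolding simple_graph_def by blast
  define P where "P p \<longleftrightarrow> distinct p \<and> is_walk W E p" for p
  obtain w where w: "w \<in> W" using Wne by blast
  have P0: "P [w]" unfolding P_def is_walk_def using w by simp
  have bnd: "\<forall>p. P p \<longrightarrow> length p < card W + 1"
  proof (intro allI impI)
    fix p assume "P p"
    then have "distinct p" "set p \<subseteq> W" unfolding P_def is_walk_def by auto
    then have "length p = card (set p)" "card (set p) \<le> card W"
      using card_mono[OF fW] distinct_card by metis+
    then show "length p < card W + 1" by linarith
  qed
  obtain p where Pp: "P p" and pmax: "\<forall>q. P q \<longrightarrow> length q \<le> length p"
    using ex_has_greatest_nat[of P "[w]" length "card W + 1", OF P0 bnd] by blast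
  have dp: "distinct p" and wp: "is_walk W E p" using Pp unfolding P_def by auto
  have pne: "p \<noteq> []" using wp unfolding is_walk_def by blast
  define u where "u = hd p"
  have uW: "u \<in> W" using wp pne unfolding u_def is_walk_def by auto
  have "\<forall>a\<in>W. \<forall>b\<in>W. E u a \<longrightarrow> E u b \<longrightarrow> a = b"
  proof (intro ballI impI, rule ccontr)
    fix a b assume a: "a \<in> W" and b: "b \<in> W" and ua: "E u a" and ub: "E u b" and ab: "a \<noteq> b"
    obtain x where x: "x \<in> W" "E u x" "2 \<le> length p \<longrightarrow> x \<noteq> p ! 1"
    proof (cases "2 \<le> length p \<and> a = p ! 1")
      case True
      then show ?thesis using that[of b] b ub ab by auto
    next
      case False
      then show ?thesis using that[of a] a ua by auto
    qed
    show False
    proof (cases "x \<in> set p")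
      case False
      have "P (x # p)" unfolding P_def
        using False dp walk_Cons[OF x(1) pne _ wp] sym x(2) unfolding u_def by auto
      then show False using pmax by fastforce
    next
      case True
      then obtain j where j: "j < length p" "p ! j = x" by (auto simp: in_set_conv_nth)
      have j0: "j \<noteq> 0"
      proof
        assume "j = 0" then have "x = u" using j pne unfolding u_def by (simp add: hd_conv_nth)
        then show False using x(2) irr by simp
      qed
      have j1: "j \<noteq> 1" using j x(3) by auto
      define c where "c = take (Suc j) p"
      have "is_cycle V E c" unfolding is_cycle_def
      proof (intro conjI)
        show "3 \<le> length c" using j j0 j1 unfolding c_def by auto
        show "distinct c" using dp unfolding c_def by simp
        show "is_walk V E c" using walk_mono[OF walk_take[OF wp] WV] unfolding c_def by simp
        have "take (Suc j) p \<noteq> []" using pne by simp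
        then have "last c = take (Suc j) p ! (length (take (Suc j) p) - 1)"
          unfolding c_def by (rule last_conv_nth)
        also have "\<dots> = x" using j by simp
        finally have "last c = x" .
        moreover have "hd c = u" using pne unfolding c_def u_def by simp
        ultimately show "E (last c) (hd c)" using sym x(2) by simp
      qed
      then show False using nc by blast
    qed
  qed
  then show "\<exists>u\<in>W. \<forall>a\<in>W. \<forall>b\<in>W. E u a \<longrightarrow> E u b \<longrightarrow> a = b" using uW by blast
qed

lemma rr_reconf: "rr V E V k A B \<Longrightarrow> reconf V E k A B"
proof (induction rule: rr.induct)
  case (base A)
  then show ?case unfolding reconf_def
    by (intro exI[of _ "[A]"]) (auto simp: rdom_def dominating_set_def)
next
  case (step A B C)
  then obtain Ds where Ds: "Ds \<noteq> []" "hd Ds = A" "last Ds = B"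
     "\<forall>D\<in>set Ds. dominating_set V E D \<and> card D \<le> k"
     "\<forall>i. Suc i < length Ds \<longrightarrow> ds_adjacent (Ds ! i) (Ds ! Suc i)"
    unfolding reconf_def by blast
  show ?case unfolding reconf_def
  proof (intro exI[of _ "Ds @ [C]"] conjI allI impI)
    show "Ds @ [C] \<noteq> []" by simp
    show "hd (Ds @ [C]) = A" using Ds by simp
    show "last (Ds @ [C]) = C" by simp
    show "\<forall>D\<in>set (Ds @ [C]). dominating_set V E D \<and> card D \<le> k"
      using Ds step by (auto simp: rdom_def dominating_set_def)
    fix i assume i: "Suc i < length (Ds @ [C])"
    show "ds_adjacent ((Ds @ [C]) ! i) ((Ds @ [C]) ! Suc i)"
    proof (cases "Suc i < length Ds")
      case True
      then show ?thesis using Ds by (simp add: nth_append)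
    next
      case False
      then have "Suc i = length Ds" using i by simp
      then have ii: "i = length Ds - 1" by simp
      have "(Ds @ [C]) ! i = Ds ! i" using \<open>Suc i = length Ds\<close> by (simp add: nth_append)
      also have "\<dots> = last Ds" using ii Ds(1) by (simp add: last_conv_nth)
      finally have "(Ds @ [C]) ! i = B" using Ds by simp
      moreover have "(Ds @ [C]) ! Suc i = C" using \<open>Suc i = length Ds\<close> by simp
      ultimately have "(Ds @ [C]) ! i = B" "(Ds @ [C]) ! Suc i = C" by auto
      then show ?thesis using step by simp
    qed
  qed
qed

theorem lemma7:
  fixes V :: "'a set" and E :: "'a \<Rightarrow> 'a \<Rightarrow> bool"
  assumes "is_tree V E"
  shows "\<exists>D. canonical_dominating_set V E D"
proof -
  have sg: "simple_graph V E" and nc: "\<nexists>c. is_cycle V E c" using assms unfolding is_tree_def by auto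
  have fV: "finite V" and sym: "\<And>a b. E a b \<Longrightarrow> E b a" using sg unfolding simple_graph_def by auto
  obtain D where D: "canon V E V D" using main[OF sym fV subset_refl acyclic_degen[OF sg nc]] by blast
  have eq: "\<And>S. rdom V E V S \<longleftrightarrow> dominating_set V E S" unfolding rdom_def dominating_set_def by simp
  have "canonical_dominating_set V E D"
    unfolding canonical_dominating_set_def min_dominating_set_def
    using D rr_reconf unfolding canon_def eq by blast
  then show ?thesis by blast
qed

end
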